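(* Let $\alpha\in]0,1[$. Let $f$ be differentiable on $[0,1]$ with $f(0)=f(1)=0$ and $f'$ contracting on $[0,1]$. Then for $x\in]0,1[$, $f$ is $(\alpha+1)$-derivable at $x$ if and only if $f'$ is $\alpha$-derivable at $x$, and in that case $$(D_{\alpha+1}f)(x)=2\,(D_\alpha f')(x).$$
   Context: Fourier coefficients: $\widehat h(s)=\frac1{2\pi}\int_{-\pi}^{\pi}h(\theta)e^{-is\theta}d\theta$; $T_N(h)$ is the $(N+1)\times(N+1)$ matrix with $(T_N(h))_{k+1,l+1}=\widehat h(k-l)$. For $\beta>0$, $\varphi_{\beta,R}(\theta)=(1-Re^{i\theta})^{\beta}(1+Re^{-i\theta})^{\beta}$ (principal branch), $\varphi_\beta=\lim_{R\to1^-}\varphi_{\beta,R}$. For $g$ on $[0,1]$, $X_N=(g(l/N))_{0\le l\le N}$; $g$ is $\beta$-derivable at $x$ if $\lim_{N\to\infty}N^{\beta}\sum_{l=0}^N(T_N(\varphi_\beta))_{k+1,l+1}(X_N)_l$ with $k=[Nx]$ exists and is finite; the limit is $(D_\beta g)(x)$. "Contracting" means Lipschitz. *)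

theory Defs
  imports "HOL-Analysis.Analysis"
begin

definition fourier_coeff :: "(real \<Rightarrow> complex) \<Rightarrow> int \<Rightarrow> complex" where
  "fourier_coeff h s =
     complex_of_real (1 / (2 * pi)) *
       integral {-pi..pi} (\<lambda>t. h t * exp (- \<i> * of_int s * complex_of_real t))"

text \<open>Toeplitz matrix entry (T_N(h))_{k+1,l+1} = hat h (k - l), for 0 <= k,l <= N.\<close>
definition toeplitz_entry :: "(real \<Rightarrow> complex) \<Rightarrow> nat \<Rightarrow> nat \<Rightarrow> complex" where
  "toeplitz_entry h k l = fourier_coeff h (int k - int l)"

definition phiR :: "real \<Rightarrow> real \<Rightarrow> real \<Rightarrow> complex" where
  "phiR \<beta> R t =
     (1 - complex_of_real R * exp (\<i> * complex_of_real t)) powr complex_of_real \<beta> *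
     (1 + complex_of_real R * exp (- \<i> * complex_of_real t)) powr complex_of_real \<beta>"

definition phi :: "real \<Rightarrow> real \<Rightarrow> complex" where
  "phi \<beta> t = Lim (at_left 1) (\<lambda>R. phiR \<beta> R t)"

definition frac_seq :: "real \<Rightarrow> (real \<Rightarrow> real) \<Rightarrow> real \<Rightarrow> nat \<Rightarrow> complex" where
  "frac_seq \<beta> g x N =
     complex_of_real (real N powr \<beta>) *
     (\<Sum>l = 0..N. toeplitz_entry (phi \<beta>) (nat \<lfloor>real N * x\<rfloor>) l *
                   complex_of_real (g (real l / real N)))"

definition frac_derivable :: "real \<Rightarrow> (real \<Rightarrow> real) \<Rightarrow> real \<Rightarrow> bool" where
  "frac_derivable \<beta> g x \<longleftrightarrow> convergent (frac_seq \<beta> g x)"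

definition frac_deriv :: "real \<Rightarrow> (real \<Rightarrow> real) \<Rightarrow> real \<Rightarrow> complex" where
  "frac_deriv \<beta> g x = lim (frac_seq \<beta> g x)"

end

theory Submission
  imports Defs
begin

lemma gchoose_Suc_real: "(a::real) gchoose Suc k = (a gchoose k) * (a - of_nat k) / of_nat (Suc k)"
  by (simp add: gbinomial_prod_rev prod.atLeastLessThan_Suc field_simps)

fun cc :: "real \<Rightarrow> nat \<Rightarrow> real" where
  "cc a 0 = 1"
| "cc a (Suc n) = cc a n * (1 - a / real (Suc n))"

lemma cc_pos: assumes "0 < a" "a < 1" shows "cc a n > 0"
proof (induction n)
  case (Suc n) have "a / real (Suc n) < 1" using assms by (simp add: field_simps)
  then show ?case using Suc by simp
qed simp

lemma cc_le1: assumes "0 < a" "a < 1" shows "cc a n \<le> 1"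
proof (induction n)
  case (Suc n) have "0 \<le> 1 - a / real (Suc n)" "1 - a / real (Suc n) \<le> 1"
    using assms by (auto simp: field_simps)
  then show ?case using Suc cc_pos[OF assms, of n] by (simp add: mult_le_one)
qed simp

lemma gchoose_cc: "((a - 1) gchoose n) = (-1)^n * cc a n"
proof (induction n)
  case (Suc n)
  show ?case unfolding gchoose_Suc_real Suc by (simp add: field_simps)
qed simp

lemma gchoose_Suc_cc: "(a gchoose Suc n) = (-1)^(Suc n) * (cc a (Suc n) - cc a n)"
proof -
  have "(a gchoose Suc n) = ((a - 1) + 1) gchoose Suc n" by simp
  also have "\<dots> = ((a - 1) gchoose n) + ((a-1) gchoose Suc n)" by (rule gbinomial_Suc_Suc)
  finally show ?thesis unfolding gchoose_cc by (simp add: algebra_simps)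
qed

lemma abs_gchoose_Suc: assumes "0 < a" "a < 1"
  shows "\<bar>a gchoose Suc n\<bar> = cc a n - cc a (Suc n)"
proof -
  have "cc a (Suc n) \<le> cc a n" using cc_pos[OF assms, of n] assms
    by (simp add: mult_le_cancel_left1)
  then show ?thesis unfolding gchoose_Suc_cc by (simp add: abs_mult)
qed

lemma abs_gchoose_le: assumes "0 < a" "a < 1" "n > 0"
  shows "\<bar>a gchoose n\<bar> \<le> 1 / real n"
proof -
  obtain m where n: "n = Suc m" using assms(3) by (cases n) auto
  have "\<bar>a gchoose n\<bar> = cc a m * (a / real n)" unfolding n abs_gchoose_Suc[OF assms(1,2)]
    by (simp add: algebra_simps)
  also have "\<dots> \<le> 1 * (1 / real n)"
    using cc_le1[OF assms(1,2)] cc_pos[OF assms(1,2)] assms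
    by (intro mult_mono) (auto simp: divide_right_mono less_imp_le)
  finally show ?thesis by simp
qed

lemma sum_abs_gchoose: fixes a :: real assumes "0 < a" "a < 1"
  shows "(\<Sum>n<M. \<bar>a gchoose n\<bar>) \<le> 2"
proof -
  have "(\<Sum>n<Suc M. \<bar>a gchoose n\<bar>) = 1 + (\<Sum>n<M. \<bar>a gchoose Suc n\<bar>)"
    by (subst sum.lessThan_Suc_shift) simp
  also have "(\<Sum>n<M. \<bar>a gchoose Suc n\<bar>) = (\<Sum>n<M. cc a n - cc a (Suc n))"
    using abs_gchoose_Suc[OF assms] by simp
  also have "\<dots> = cc a 0 - cc a M" by (rule sum_lessThan_telescope')
  also have "\<dots> \<le> 1" using cc_pos[OF assms, of M] by simp
  finally have "(\<Sum>n<Suc M. \<bar>a gchoose n\<bar>) \<le> 2" by simp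
  moreover have "(\<Sum>n<M. \<bar>a gchoose n\<bar>) \<le> (\<Sum>n<Suc M. \<bar>a gchoose n\<bar>)"
    by (intro sum_mono2) auto
  ultimately show ?thesis by linarith
qed

lemma summable_abs_gchoose: fixes a :: real assumes "0 < a" "a < 1"
  shows "summable (\<lambda>n. \<bar>a gchoose n\<bar>)" "(\<Sum>n. \<bar>a gchoose n\<bar>) \<le> 2"
proof -
  show s: "summable (\<lambda>n. \<bar>a gchoose n\<bar>)"
    by (rule summableI_nonneg_bounded[where x=2]) (use sum_abs_gchoose[OF assms] in auto)
  show "(\<Sum>n. \<bar>a gchoose n\<bar>) \<le> 2"
    by (rule suminf_le_const[OF s]) (use sum_abs_gchoose[OF assms] in auto)
qed

lemma gchoose_of_real: "(of_real a :: complex) gchoose n = of_real (a gchoose n)"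
  by (simp add: gbinomial_prod_rev of_real_prod)

lemma abel_gchoose:
  fixes a :: real and w :: complex
  assumes "0 < a" "a < 1" "norm w = 1"
  shows "((\<lambda>R. \<Sum>n. of_real (a gchoose n) * (of_real R * w)^n) \<longlongrightarrow>
           (\<Sum>n. of_real (a gchoose n) * w^n)) (at_left 1)"
proof -
  have ev: "eventually (\<lambda>R::real. 0 < R \<and> R < 1) (at_left 1)"
  proof -
    have "eventually (\<lambda>x. x \<in> {0<..<1}) (at_left (1::real))" by (rule eventually_at_left_real) simp
    then show ?thesis by (rule eventually_mono) auto
  qed
  have "((\<lambda>R. \<Sum>n. of_real (a gchoose n) * (of_real R * w)^n) \<longlongrightarrow>
           (\<Sum>n. of_real (a gchoose n) * (of_real 1 * w)^n)) (at_left 1)"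
  proof (rule tannerys_theorem[THEN conjunct2, THEN conjunct2])
    fix k show "((\<lambda>R. of_real (a gchoose k) * (of_real R * w)^k) \<longlongrightarrow>
                   of_real (a gchoose k) * (of_real 1 * w)^k) (at_left (1::real))"
      by (intro tendsto_intros)
  next
    show "summable (\<lambda>n. \<bar>a gchoose n\<bar>)" using summable_abs_gchoose[OF assms(1,2)] by simp
  next
    show "at_left (1::real) \<noteq> bot" by simp
  next
    show "\<forall>\<^sub>F (k, R) in at_top \<times>\<^sub>F at_left 1.
            norm (of_real (a gchoose k) * (complex_of_real R * w) ^ k) \<le> \<bar>a gchoose k\<bar>"
    proof -
      have bd: "norm (of_real (a gchoose k) * (complex_of_real R * w) ^ k) \<le> \<bar>a gchoose k\<bar>"
        if "0 < R \<and> R < 1" for k :: nat and R :: real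
      proof -
        have "norm (complex_of_real R * w) ^ k \<le> 1"
          using assms that by (simp add: norm_mult power_le_one)
        then show ?thesis
          by (simp add: norm_mult norm_power mult_left_le)
      qed
      show ?thesis
        apply (subst eventually_prod_filter)
        apply (rule exI[of _ "\<lambda>_. True"], rule exI[of _ "\<lambda>R. 0<R \<and> R<1"])
        using ev bd by auto
    qed
  qed
  then show ?thesis by simp
qed

definition FF :: "real \<Rightarrow> real \<Rightarrow> complex" where
  "FF a t = (\<Sum>n. of_real (a gchoose n) * (- exp (\<i> * complex_of_real t))^n)"
definition GG :: "real \<Rightarrow> real \<Rightarrow> complex" where
  "GG a t = (\<Sum>n. of_real (a gchoose n) * (exp (- \<i> * complex_of_real t))^n)"

lemma ev_01: "eventually (\<lambda>R::real. 0 < R \<and> R < 1) (at_left 1)"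
proof -
  have "eventually (\<lambda>x. x \<in> {0<..<1}) (at_left (1::real))" by (rule eventually_at_left_real) simp
  then show ?thesis by (rule eventually_mono) auto
qed

lemma binom_powr:
  fixes a :: real and z :: complex
  assumes "norm z < 1"
  shows "(1 + z) powr of_real a = (\<Sum>n. of_real (a gchoose n) * z^n)"
  using sums_unique[OF gen_binomial_complex[OF assms, of "of_real a"]]
  by (simp add: gchoose_of_real)

lemma phiR_tendsto:
  fixes a :: real
  assumes "0 < a" "a < 1"
  shows "((\<lambda>R. phiR a R t) \<longlongrightarrow> FF a t * GG a t) (at_left 1)"
proof -
  let ?e = "exp (\<i> * complex_of_real t)" and ?e' = "exp (- \<i> * complex_of_real t)"
  have n1: "norm (- ?e) = 1" "norm ?e' = 1" by (simp_all add: norm_exp_eq_Re)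
  have eq: "eventually (\<lambda>R. (\<Sum>n. of_real (a gchoose n) * (of_real R * (- ?e))^n) *
                             (\<Sum>n. of_real (a gchoose n) * (of_real R * ?e')^n) = phiR a R t) (at_left 1)"
  proof (rule eventually_mono[OF ev_01])
    fix R :: real assume R: "0 < R \<and> R < 1"
    have "norm (of_real R * (- ?e)) < 1" "norm (of_real R * ?e') < 1"
      using R n1 by (simp_all add: norm_mult)
    from binom_powr[OF this(1), of a] binom_powr[OF this(2), of a]
    show "(\<Sum>n. of_real (a gchoose n) * (of_real R * (- ?e))^n) *
          (\<Sum>n. of_real (a gchoose n) * (of_real R * ?e')^n) = phiR a R t"
      unfolding phiR_def by (simp add: algebra_simps)
  qed
  have "((\<lambda>R. (\<Sum>n. of_real (a gchoose n) * (of_real R * (- ?e))^n) *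
            (\<Sum>n. of_real (a gchoose n) * (of_real R * ?e')^n)) \<longlongrightarrow> FF a t * GG a t) (at_left 1)"
    unfolding FF_def GG_def
    by (intro tendsto_mult abel_gchoose assms n1)
  then show ?thesis using eq by (rule Lim_transform_eventually)
qed

lemma phi_FG:
  assumes "0 < a" "a < 1"
  shows "phi a t = FF a t * GG a t"
  unfolding phi_def by (rule tendsto_Lim[OF _ phiR_tendsto[OF assms]]) simp

lemma phi_succ:
  assumes "0 < a" "a < 1"
  shows "phi (a + 1) t = phi a t * (exp (- \<i> * complex_of_real t) - exp (\<i> * complex_of_real t))"
proof -
  let ?e = "exp (\<i> * complex_of_real t)" and ?e' = "exp (- \<i> * complex_of_real t)"
  have ee: "?e * ?e' = 1" by (simp flip: exp_add)
  have eq: "\<And>R. phiR (a + 1) R t = phiR a R t *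
      ((1 - complex_of_real R * ?e) * (1 + complex_of_real R * ?e'))"
    unfolding phiR_def by (simp add: powr_add algebra_simps)
  have "((\<lambda>R. phiR a R t * ((1 - complex_of_real R * ?e) * (1 + complex_of_real R * ?e')))
         \<longlongrightarrow> FF a t * GG a t * ((1 - complex_of_real 1 * ?e) * (1 + complex_of_real 1 * ?e'))) (at_left 1)"
    by (intro tendsto_intros phiR_tendsto assms)
  moreover have "(1 - complex_of_real 1 * ?e) * (1 + complex_of_real 1 * ?e') = ?e' - ?e"
    using ee by (simp add: algebra_simps)
  ultimately have "((\<lambda>R. phiR (a + 1) R t) \<longlongrightarrow> FF a t * GG a t * (?e' - ?e)) (at_left 1)"
    unfolding eq by simp
  then have "phi (a + 1) t = FF a t * GG a t * (?e' - ?e)"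
    unfolding phi_def by (rule tendsto_Lim[rotated]) simp
  then show ?thesis using phi_FG[OF assms] by simp
qed

definition FFn :: "real \<Rightarrow> nat \<Rightarrow> real \<Rightarrow> complex" where
  "FFn a M t = (\<Sum>n<M. of_real (a gchoose n) * (- exp (\<i> * complex_of_real t))^n)"
definition GGn :: "real \<Rightarrow> nat \<Rightarrow> real \<Rightarrow> complex" where
  "GGn a M t = (\<Sum>n<M. of_real (a gchoose n) * (exp (- \<i> * complex_of_real t))^n)"

lemma norm_term1: "norm (of_real (a gchoose n) * (- exp (\<i> * complex_of_real t))^n) = \<bar>a gchoose n\<bar>"
  by (simp add: norm_mult norm_power norm_exp_eq_Re)
lemma norm_term2: "norm (of_real (a gchoose n) * (exp (- \<i> * complex_of_real t))^n) = \<bar>a gchoose n\<bar>"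
  by (simp add: norm_mult norm_power norm_exp_eq_Re)

lemma FF_ul: assumes "0 < a" "a < 1"
  shows "uniform_limit S (FFn a) (FF a) sequentially"
  unfolding FFn_def FF_def
  by (rule Weierstrass_m_test[where M="\<lambda>n. \<bar>a gchoose n\<bar>"])
     (simp_all add: norm_term1 summable_abs_gchoose[OF assms])

lemma GG_ul: assumes "0 < a" "a < 1"
  shows "uniform_limit S (GGn a) (GG a) sequentially"
  unfolding GGn_def GG_def
  by (rule Weierstrass_m_test[where M="\<lambda>n. \<bar>a gchoose n\<bar>"])
     (simp_all add: norm_mult norm_power norm_exp_eq_Re summable_abs_gchoose[OF assms])

lemma FFn_cont: "continuous_on S (FFn a M)"
  unfolding FFn_def by (intro continuous_intros)
lemma GGn_cont: "continuous_on S (GGn a M)"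
  unfolding GGn_def by (intro continuous_intros)

lemma FF_cont: assumes "0 < a" "a < 1" shows "continuous_on S (FF a)"
  by (rule uniform_limit_theorem[OF _ FF_ul[OF assms]]) (simp_all add: FFn_cont)
lemma GG_cont: assumes "0 < a" "a < 1" shows "continuous_on S (GG a)"
  by (rule uniform_limit_theorem[OF _ GG_ul[OF assms]]) (simp_all add: GGn_cont)

lemma FF_bound: assumes "0 < a" "a < 1" shows "norm (FF a t) \<le> 2"
proof -
  have s: "summable (\<lambda>n. norm (of_real (a gchoose n) * (- exp (\<i> * complex_of_real t))^n))"
    unfolding norm_term1 by (rule summable_abs_gchoose[OF assms])
  have "norm (FF a t) \<le> (\<Sum>n. norm (of_real (a gchoose n) * (- exp (\<i> * complex_of_real t))^n))"
    unfolding FF_def by (rule summable_norm[OF s])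
  also have "\<dots> \<le> 2" unfolding norm_term1 by (rule summable_abs_gchoose[OF assms])
  finally show ?thesis .
qed

lemma GG_bound: assumes "0 < a" "a < 1" shows "norm (GG a t) \<le> 2"
proof -
  have s: "summable (\<lambda>n. norm (of_real (a gchoose n) * (exp (- \<i> * complex_of_real t))^n))"
    unfolding norm_term2 by (rule summable_abs_gchoose[OF assms])
  have "norm (GG a t) \<le> (\<Sum>n. norm (of_real (a gchoose n) * (exp (- \<i> * complex_of_real t))^n))"
    unfolding GG_def by (rule summable_norm[OF s])
  also have "\<dots> \<le> 2" unfolding norm_term2 by (rule summable_abs_gchoose[OF assms])
  finally show ?thesis .
qed

lemma bounded_by2: "(\<And>t. norm (h t) \<le> (B::real)) \<Longrightarrow> bounded (h ` S)"
  unfolding bounded_iff by blast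

lemma phi_cont: assumes "0 < a" "a < 1" shows "continuous_on S (phi a)"
proof -
  have "continuous_on S (\<lambda>t. FF a t * GG a t)"
    by (intro continuous_intros FF_cont GG_cont assms)
  then show ?thesis using phi_FG[OF assms] by simp
qed

lemma prod_ul: assumes "0 < a" "a < 1"
  shows "uniform_limit S (\<lambda>M t. FFn a M t * GGn a M t * exp (- \<i> * of_int s * complex_of_real t))
            (\<lambda>t. phi a t * exp (- \<i> * of_int s * complex_of_real t)) sequentially"
proof -
  have "uniform_limit S (\<lambda>M t. FFn a M t * GGn a M t * exp (- \<i> * of_int s * complex_of_real t))
            (\<lambda>t. FF a t * GG a t * exp (- \<i> * of_int s * complex_of_real t)) sequentially"
  proof (intro uniform_lim_mult FF_ul GG_ul assms uniform_limit_const bounded_by2)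
    fix t
    show "norm (FF a t) \<le> 2" by (rule FF_bound[OF assms])
    show "norm (GG a t) \<le> 2" by (rule GG_bound[OF assms])
    show "norm (FF a t * GG a t) \<le> 2 * 2"
      unfolding norm_mult by (intro mult_mono FF_bound GG_bound assms) auto
    show "norm (exp (- \<i> * of_int s * complex_of_real t)) \<le> 1" by (simp add: norm_exp_eq_Re)
  qed
  then show ?thesis using phi_FG[OF assms] by simp
qed

definition EE :: "int \<Rightarrow> real \<Rightarrow> complex" where
  "EE m t = exp (\<i> * of_int m * complex_of_real t)"

lemma EE_mult: "EE m t * EE n t = EE (m + n) t"
  unfolding EE_def by (simp add: exp_add[symmetric] algebra_simps)

lemma EE_pow1: "(exp (\<i> * complex_of_real t))^j = EE (int j) t"
  unfolding EE_def by (simp add: exp_of_nat_mult[symmetric] algebra_simps)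

lemma EE_pow2: "(exp (- \<i> * complex_of_real t))^j = EE (- int j) t"
  unfolding EE_def by (simp add: exp_of_nat_mult[symmetric] algebra_simps)

lemma EE_integral: "(EE n has_integral (if n = 0 then 2 * pi else 0)) {-pi..pi}"
proof (cases "n = 0")
  case True
  then have "EE n = (\<lambda>_. 1)" unfolding EE_def by auto
  then show ?thesis using True has_integral_const_real[of "1::complex" "-pi" pi] by (simp add: scaleR_conv_of_real)
next
  case False
  define A where "A = \<i> * complex_of_int n"
  have A0: "A \<noteq> 0" using False by (simp add: A_def)
  have "((\<lambda>t. A * exp (t *\<^sub>R A)) has_integral (exp (pi *\<^sub>R A) - exp ((-pi) *\<^sub>R A))) {-pi..pi}"
    by (rule fundamental_theorem_of_calculus)
       (auto intro!: has_vector_derivative_at_within exp_scaleR_has_vector_derivative_left)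
  moreover have "exp (pi *\<^sub>R A) = exp ((-pi) *\<^sub>R A)"
  proof -
    define x where "x = pi *\<^sub>R A"
    have h: "exp ((2 * of_int n * complex_of_real pi) * \<i>) = 1" using exp_integer_2pi[of "of_int n"] by simp
    have "exp x = exp (-x) * exp ((2 * of_int n * complex_of_real pi) * \<i>)"
      by (subst exp_add[symmetric]) (simp add: x_def A_def scaleR_conv_of_real algebra_simps)
    then have "exp x = exp (-x)" using h by simp
    then show ?thesis by (simp add: x_def)
  qed
  ultimately have "((\<lambda>t. A * exp (t *\<^sub>R A)) has_integral 0) {-pi..pi}" by simp
  then have "((\<lambda>t. (1/A) * (A * exp (t *\<^sub>R A))) has_integral (1/A) * 0) {-pi..pi}"
    by (rule has_integral_mult_right)
  then have "((\<lambda>t. exp (t *\<^sub>R A)) has_integral 0) {-pi..pi}" using A0 by simp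
  moreover have "(\<lambda>t. exp (t *\<^sub>R A)) = EE n"
    by (auto simp: EE_def A_def scaleR_conv_of_real algebra_simps)
  ultimately show ?thesis using False by simp
qed

lemma trig_expand:
  "FFn a M t * GGn a M t * exp (- \<i> * of_int s * complex_of_real t) =
   (\<Sum>j<M. \<Sum>k<M. of_real ((a gchoose j) * (a gchoose k) * (-1)^j) * EE (int j - int k - s) t)"
proof -
  have e3: "exp (- \<i> * of_int s * complex_of_real t) = EE (- s) t" unfolding EE_def by simp
  have p1: "(- exp (\<i> * complex_of_real t))^j = (-1)^j * EE (int j) t" for j
    by (metis power_minus EE_pow1)
  have "FFn a M t * GGn a M t * exp (- \<i> * of_int s * complex_of_real t) =
    (\<Sum>j<M. \<Sum>k<M. (of_real (a gchoose j) * ((-1)^j * EE (int j) t)) * (of_real (a gchoose k) * EE (- int k) t) * EE (- s) t)"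
    unfolding FFn_def GGn_def sum_distrib_left sum_distrib_right e3 p1 EE_pow2 by (rule sum.swap)
  also have "\<dots> = (\<Sum>j<M. \<Sum>k<M. of_real ((a gchoose j) * (a gchoose k) * (-1)^j) * EE (int j - int k - s) t)"
  proof (intro sum.cong refl)
    fix j k
    have ee: "EE (int j) t * EE (- int k) t * EE (- s) t = EE (int j - int k - s) t"
      by (simp add: EE_mult)
    have "(of_real (a gchoose j) * ((-1)^j * EE (int j) t)) * (of_real (a gchoose k) * EE (- int k) t) * EE (- s) t
        = (of_real (a gchoose j) * (-1)^j * of_real (a gchoose k)) * (EE (int j) t * EE (- int k) t * EE (- s) t)"
      by (simp only: mult_ac)
    also have "\<dots> = of_real ((a gchoose j) * (a gchoose k) * (-1)^j) * EE (int j - int k - s) t"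
      unfolding ee by simp
    finally show "(of_real (a gchoose j) * ((-1)^j * EE (int j) t)) * (of_real (a gchoose k) * EE (- int k) t) * EE (- s) t
        = of_real ((a gchoose j) * (a gchoose k) * (-1)^j) * EE (int j - int k - s) t" .
  qed
  finally show ?thesis .
qed

lemma sum_if_eq_le:
  fixes c :: real assumes "c \<ge> 0"
  shows "(\<Sum>j<M. if int j = m then c else 0) \<le> c"
proof (cases "m \<ge> 0")
  case True
  have "(\<Sum>j<M. if int j = m then c else 0) = (\<Sum>j<M. if j = nat m then c else 0)"
    using True by (intro sum.cong) auto
  also have "\<dots> = (if nat m \<in> {..<M} then c else 0)" by (rule sum.delta) simp
  finally show ?thesis using assms by auto
next
  case False
  then have "(\<Sum>j<M. if int j = m then c else 0) = 0" by (intro sum.neutral) auto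
  then show ?thesis using assms by simp
qed

lemma dsum_bound:
  fixes a :: real assumes a: "0 < a" "a < 1"
  shows "(\<Sum>j<M. \<Sum>k<M. if int j - int k = s then \<bar>a gchoose j\<bar> * \<bar>a gchoose k\<bar> else 0)
           \<le> 4 / (real_of_int \<bar>s\<bar> + 1)"
proof -
  let ?b = "\<lambda>n. \<bar>a gchoose n\<bar>"
  have S: "(\<Sum>n<M. ?b n) \<le> 2" by (rule sum_abs_gchoose[OF a])
  have S0: "0 \<le> (\<Sum>n<M. ?b n)" by (intro sum_nonneg) auto
  consider "s = 0" | "s > 0" | "s < 0" by linarith
  then show ?thesis
  proof cases
    case 1
    have "(\<Sum>j<M. \<Sum>k<M. if int j - int k = s then ?b j * ?b k else 0) \<le> (\<Sum>j<M. \<Sum>k<M. ?b j * ?b k)"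
      by (intro sum_mono) auto
    also have "\<dots> = (\<Sum>n<M. ?b n) * (\<Sum>n<M. ?b n)" by (simp add: sum_product)
    also have "\<dots> \<le> 2 * 2" using S S0 by (intro mult_mono) auto
    finally show ?thesis using 1 by simp
  next
    case 2
    have "(\<Sum>j<M. \<Sum>k<M. if int j - int k = s then ?b j * ?b k else 0)
          \<le> (\<Sum>j<M. \<Sum>k<M. if int j = int k + s then ?b k / of_int s else 0)"
    proof (intro sum_mono)
      fix j k
      show "(if int j - int k = s then ?b j * ?b k else 0) \<le> (if int j = int k + s then ?b k / of_int s else 0)"
      proof (cases "int j - int k = s")
        case True
        then have j0: "j > 0" and js: "real j \<ge> of_int s" using 2 by linarith+
        have "?b j \<le> 1 / real j" by (rule abs_gchoose_le[OF a j0])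
        also have "\<dots> \<le> 1 / of_int s" using 2 js by (intro divide_left_mono) auto
        finally have "?b j * ?b k \<le> (1 / of_int s) * ?b k" by (intro mult_right_mono) auto
        then show ?thesis using True by auto
      qed auto
    qed
    also have "\<dots> = (\<Sum>k<M. \<Sum>j<M. if int j = int k + s then ?b k / of_int s else 0)"
      by (rule sum.swap)
    also have "\<dots> \<le> (\<Sum>k<M. ?b k / of_int s)"
      using 2 by (intro sum_mono sum_if_eq_le) auto
    also have "\<dots> = (\<Sum>k<M. ?b k) / of_int s" by (simp add: sum_divide_distrib)
    also have "\<dots> \<le> 2 / of_int s" using 2 S by (intro divide_right_mono) auto
    also have "\<dots> \<le> 4 / (real_of_int \<bar>s\<bar> + 1)" using 2 by (simp add: field_simps)
    finally show ?thesis .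
  next
    case 3
    have "(\<Sum>j<M. \<Sum>k<M. if int j - int k = s then ?b j * ?b k else 0)
          \<le> (\<Sum>j<M. \<Sum>k<M. if int k = int j - s then ?b j / of_int (- s) else 0)"
    proof (intro sum_mono)
      fix j k
      show "(if int j - int k = s then ?b j * ?b k else 0) \<le> (if int k = int j - s then ?b j / of_int (-s) else 0)"
      proof (cases "int j - int k = s")
        case True
        then have k0: "k > 0" and ks: "real k \<ge> of_int (-s)" using 3 by linarith+
        have "?b k \<le> 1 / real k" by (rule abs_gchoose_le[OF a k0])
        also have "\<dots> \<le> 1 / of_int (-s)" using 3 ks k0 by (intro divide_left_mono) (auto simp: mult_pos_neg)
        finally have "?b j * ?b k \<le> ?b j * (1 / of_int (-s))" by (intro mult_left_mono) auto
        then show ?thesis using True by auto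
      qed auto
    qed
    also have "\<dots> \<le> (\<Sum>j<M. ?b j / of_int (-s))"
      using 3 by (intro sum_mono sum_if_eq_le) (auto intro: divide_nonneg_neg)
    also have "\<dots> = (\<Sum>k<M. ?b k) / of_int (-s)" by (simp only: sum_divide_distrib)
    also have "\<dots> \<le> 2 / of_int (-s)" using 3 S by (intro divide_right_mono) auto
    also have "\<dots> \<le> 4 / (real_of_int \<bar>s\<bar> + 1)" using 3 by (simp add: field_simps)
    finally show ?thesis .
  qed
qed

lemma EE_integral': "(EE n has_integral (if n = 0 then 2 * complex_of_real pi else 0)) {-pi..pi}"
  using EE_integral[of n] by (cases "n = 0") auto

lemma trig_integral:
  "((\<lambda>t. FFn a M t * GGn a M t * exp (- \<i> * of_int s * complex_of_real t)) has_integral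
    (\<Sum>j<M. \<Sum>k<M. complex_of_real ((a gchoose j) * (a gchoose k) * (-1)^j) *
        (if int j - int k - s = 0 then 2 * complex_of_real pi else 0))) {-pi..pi}"
  unfolding trig_expand
  by (intro has_integral_sum finite_lessThan has_integral_mult_right) (rule EE_integral')

lemma trig_integral_bound:
  fixes a :: real assumes a: "0 < a" "a < 1"
  shows "norm (\<Sum>j<M. \<Sum>k<M. complex_of_real ((a gchoose j) * (a gchoose k) * (-1)^j) *
        (if int j - int k - s = 0 then 2 * complex_of_real pi else 0)) \<le> 2 * pi * (4 / (real_of_int \<bar>s\<bar> + 1))"
proof -
  have "norm (\<Sum>j<M. \<Sum>k<M. complex_of_real ((a gchoose j) * (a gchoose k) * (-1)^j) *
        (if int j - int k - s = 0 then 2 * complex_of_real pi else 0))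
     \<le> (\<Sum>j<M. \<Sum>k<M. norm (complex_of_real ((a gchoose j) * (a gchoose k) * (-1)^j) *
        (if int j - int k - s = 0 then 2 * complex_of_real pi else 0)))"
    by (intro order.trans[OF norm_sum] sum_mono norm_sum)
  also have "\<dots> = (\<Sum>j<M. \<Sum>k<M. 2 * pi * (if int j - int k = s then \<bar>a gchoose j\<bar> * \<bar>a gchoose k\<bar> else 0))"
    by (intro sum.cong refl) (auto simp: norm_mult abs_mult power_abs norm_power)
  also have "\<dots> = 2 * pi * (\<Sum>j<M. \<Sum>k<M. (if int j - int k = s then \<bar>a gchoose j\<bar> * \<bar>a gchoose k\<bar> else 0))"
    by (simp add: sum_distrib_left)
  also have "\<dots> \<le> 2 * pi * (4 / (real_of_int \<bar>s\<bar> + 1))"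
    by (intro mult_left_mono dsum_bound a) auto
  finally show ?thesis .
qed

lemma coeff_bound:
  fixes a :: real assumes a: "0 < a" "a < 1"
  shows "norm (fourier_coeff (phi a) s) \<le> 4 / (real_of_int \<bar>s\<bar> + 1)"
proof -
  obtain I J where I: "\<And>M. ((\<lambda>t. FFn a M t * GGn a M t * exp (- \<i> * of_int s * complex_of_real t)) has_integral I M) {-pi..pi}"
    and J: "((\<lambda>t. phi a t * exp (- \<i> * of_int s * complex_of_real t)) has_integral J) {-pi..pi}"
    and IJ: "I \<longlonglongrightarrow> J"
    by (rule uniform_limit_integral[OF prod_ul[OF a]]) (auto intro!: continuous_intros FFn_cont GGn_cont)
  have "norm (I M) \<le> 2 * pi * (4 / (real_of_int \<bar>s\<bar> + 1))" for M
  proof -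
    have "I M = (\<Sum>j<M. \<Sum>k<M. complex_of_real ((a gchoose j) * (a gchoose k) * (-1)^j) *
        (if int j - int k - s = 0 then 2 * complex_of_real pi else 0))"
      using has_integral_unique[OF I trig_integral] by simp
    then show ?thesis using trig_integral_bound[OF a] by simp
  qed
  then have nJ: "norm J \<le> 2 * pi * (4 / (real_of_int \<bar>s\<bar> + 1))"
    by (intro Lim_norm_ubound[OF _ IJ]) auto
  have "fourier_coeff (phi a) s = complex_of_real (1 / (2 * pi)) * J"
    unfolding fourier_coeff_def using integral_unique[OF J] by simp
  then have "norm (fourier_coeff (phi a) s) = (1 / (2 * pi)) * norm J"
    by (simp add: norm_mult norm_divide)
  also have "\<dots> \<le> (1 / (2 * pi)) * (2 * pi * (4 / (real_of_int \<bar>s\<bar> + 1)))"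
    by (intro mult_left_mono nJ) auto
  also have "\<dots> = 4 / (real_of_int \<bar>s\<bar> + 1)" by simp
  finally show ?thesis .
qed

lemma coeff_succ:
  fixes a :: real assumes a: "0 < a" "a < 1"
  shows "fourier_coeff (phi (a + 1)) s = fourier_coeff (phi a) (s + 1) - fourier_coeff (phi a) (s - 1)"
proof -
  have eq: "phi (a + 1) t * exp (- \<i> * of_int s * complex_of_real t) =
        phi a t * exp (- \<i> * of_int (s + 1) * complex_of_real t) -
        phi a t * exp (- \<i> * of_int (s - 1) * complex_of_real t)" for t
  proof -
    have "exp (- \<i> * complex_of_real t) * exp (- \<i> * of_int s * complex_of_real t) =
          exp (- \<i> * of_int (s + 1) * complex_of_real t)"
      by (simp add: exp_add[symmetric] algebra_simps)
    moreover have "exp (\<i> * complex_of_real t) * exp (- \<i> * of_int s * complex_of_real t) =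
          exp (- \<i> * of_int (s - 1) * complex_of_real t)"
      by (simp add: exp_add[symmetric] algebra_simps)
    ultimately show ?thesis unfolding phi_succ[OF a] by (simp add: algebra_simps)
  qed
  have int: "(\<lambda>t. phi a t * exp (- \<i> * of_int m * complex_of_real t)) integrable_on {-pi..pi}" for m
    by (intro integrable_continuous_interval continuous_intros phi_cont a)
  show ?thesis
    unfolding fourier_coeff_def eq integral_diff[OF int int]
    by (simp add: algebra_simps)
qed

lemma taylor_lip:
  fixes f f' :: "real \<Rightarrow> real"
  assumes der: "\<And>x. x \<in> {0..1} \<Longrightarrow> (f has_real_derivative f' x) (at x within {0..1})"
    and lip: "L-lipschitz_on {0..1} f'"
    and x: "x \<in> {0..1}" and y: "y \<in> {0..1}"
  shows "\<bar>f y - f x - f' x * (y - x)\<bar> \<le> L * (y - x)^2"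
proof -
  have L: "\<And>u v. u \<in> {0..1} \<Longrightarrow> v \<in> {0..1} \<Longrightarrow> \<bar>f' u - f' v\<bar> \<le> L * \<bar>u - v\<bar>"
    using lip unfolding lipschitz_on_def dist_real_def by blast
  have mvt: "\<exists>z\<in>{a..b}. f b - f a = f' z * (b - a)" if ab: "a \<le> b" "a \<in> {0..1}" "b \<in> {0..1}" for a b
  proof -
    have "\<exists>z\<in>{a..b}. f b - f a = (*) (f' z) (b - a)"
    proof (rule mvt_very_simple[OF ab(1)])
      fix z assume "a \<le> z" "z \<le> b"
      then have "z \<in> {0..1}" "{a..b} \<subseteq> {0..1}" using ab by auto
      have "(f has_real_derivative f' z) (at z within {0..1})" by (rule der) fact
      then have "(f has_derivative (*) (f' z)) (at z within {0..1})"
        by (rule has_field_derivative_imp_has_derivative)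
      then show "(f has_derivative (*) (f' z)) (at z within {a..b})"
        by (rule has_derivative_subset) fact
    qed
    then show ?thesis by simp
  qed
  show ?thesis
  proof (cases "x \<le> y")
    case True
    then obtain z where z: "z \<in> {x..y}" "f y - f x = f' z * (y - x)" using mvt[OF True x y] by blast
    have zz: "z \<in> {0..1}" using z x y by auto
    have "\<bar>f y - f x - f' x * (y - x)\<bar> = \<bar>f' z - f' x\<bar> * \<bar>y - x\<bar>"
    proof -
      have "f y - f x - f' x * (y - x) = (f' z - f' x) * (y - x)" using z by (simp add: algebra_simps)
      then show ?thesis by (simp add: abs_mult)
    qed
    also have "\<dots> \<le> (L * \<bar>z - x\<bar>) * \<bar>y - x\<bar>" using L[OF zz x] by (intro mult_right_mono) auto
    also have "\<dots> \<le> (L * \<bar>y - x\<bar>) * \<bar>y - x\<bar>"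
      using z lip unfolding lipschitz_on_def by (intro mult_right_mono mult_left_mono) auto
    finally show ?thesis by (simp add: power2_eq_square)
  next
    case False
    then obtain z where z: "z \<in> {y..x}" "f x - f y = f' z * (x - y)" using mvt[of y x] False x y by auto
    have zz: "z \<in> {0..1}" using z x y by auto
    have "\<bar>f y - f x - f' x * (y - x)\<bar> = \<bar>f' z - f' x\<bar> * \<bar>y - x\<bar>"
    proof -
      have "f y - f x - f' x * (y - x) = (f' z - f' x) * (y - x)" using z by (simp add: algebra_simps)
      then show ?thesis by (simp add: abs_mult)
    qed
    also have "\<dots> \<le> (L * \<bar>z - x\<bar>) * \<bar>y - x\<bar>" using L[OF zz x] by (intro mult_right_mono) auto
    also have "\<dots> \<le> (L * \<bar>y - x\<bar>) * \<bar>y - x\<bar>"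
      using z lip unfolding lipschitz_on_def by (intro mult_right_mono mult_left_mono) auto
    finally show ?thesis by (simp add: power2_eq_square)
  qed
qed

lemma shiftL1:
  fixes h :: "int \<Rightarrow> 'a::comm_ring"
  shows "(\<Sum>l=0..N. h (int l - 1) * x l) =
         (\<Sum>m=0..N. h (int m) * (if m < N then x (Suc m) else 0)) + h (-1) * x 0"
proof (induction N)
  case 0 then show ?case by simp
next
  case (Suc N)
  have "(\<Sum>m=0..Suc N. h (int m) * (if m < Suc N then x (Suc m) else 0)) =
        (\<Sum>m=0..N. h (int m) * x (Suc m))"
    by (simp add: sum.atLeast0_atMost_Suc)
  moreover have "(\<Sum>m=0..N. h (int m) * (if m < N then x (Suc m) else 0)) =
        (\<Sum>m=0..N. h (int m) * x (Suc m)) - h (int N) * x (Suc N)"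
  proof (cases N)
    case 0 then show ?thesis by simp
  next
    case (Suc n) then show ?thesis by (simp add: sum.atLeast0_atMost_Suc)
  qed
  ultimately show ?case using Suc by (simp add: sum.atLeast0_atMost_Suc algebra_simps)
qed

lemma shiftL2:
  fixes h :: "int \<Rightarrow> 'a::comm_ring"
  shows "(\<Sum>l=0..N. h (int l + 1) * x l) =
         (\<Sum>m=0..N. h (int m) * (if 1 \<le> m then x (m - 1) else 0)) + h (int N + 1) * x N"
proof (induction N)
  case 0 then show ?case by simp
next
  case (Suc N)
  then show ?case by (simp add: sum.atLeast0_atMost_Suc algebra_simps)
qed

lemma sum_inj_le:
  fixes h :: "'b \<Rightarrow> real"
  assumes "inj_on g S" "g ` S \<subseteq> T" "finite T" "\<And>y. y \<in> T \<Longrightarrow> 0 \<le> h y"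
  shows "(\<Sum>x\<in>S. h (g x)) \<le> (\<Sum>y\<in>T. h y)"
proof -
  have "(\<Sum>x\<in>S. h (g x)) = (\<Sum>y\<in>g ` S. h y)" using sum.reindex[OF assms(1), of h] by simp
  also have "\<dots> \<le> (\<Sum>y\<in>T. h y)" using assms by (intro sum_mono2) auto
  finally show ?thesis .
qed

lemma harm_sum_bound:
  assumes "k \<le> N"
  shows "(\<Sum>m=0..N. 1 / (real_of_int \<bar>int k - int m\<bar> + 1)) \<le> 2 * (\<Sum>i=0..N. 1 / (real i + 1))"
proof -
  let ?w = "\<lambda>m. 1 / (real_of_int \<bar>int k - int m\<bar> + 1)"
  let ?h = "\<lambda>i::nat. 1 / (real i + 1)"
  have split: "{0..N} = {m\<in>{0..N}. m \<le> k} \<union> {m\<in>{0..N}. k < m}" by auto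
  have "(\<Sum>m=0..N. ?w m) = (\<Sum>m\<in>{m\<in>{0..N}. m \<le> k}. ?w m) + (\<Sum>m\<in>{m\<in>{0..N}. k < m}. ?w m)"
    by (subst split, rule sum.union_disjoint) auto
  also have "(\<Sum>m\<in>{m\<in>{0..N}. m \<le> k}. ?w m) = (\<Sum>m\<in>{m\<in>{0..N}. m \<le> k}. ?h (k - m))"
    by (intro sum.cong refl) (auto simp: of_nat_diff)
  also have "\<dots> \<le> (\<Sum>i=0..N. ?h i)"
    using assms by (intro sum_inj_le) (auto simp: inj_on_def)
  also have "(\<Sum>m\<in>{m\<in>{0..N}. k < m}. ?w m) = (\<Sum>m\<in>{m\<in>{0..N}. k < m}. ?h (m - k))"
    by (intro sum.cong refl) (auto simp: of_nat_diff)
  also have "\<dots> \<le> (\<Sum>i=0..N. ?h i)"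
    by (intro sum_inj_le) (auto simp: inj_on_def)
  finally show ?thesis by simp
qed

lemma harm_ln_bound:
  assumes "N \<ge> 1"
  shows "(\<Sum>i=0..N. 1 / (real i + 1)) \<le> 2 + ln (real N)"
proof -
  have "(\<Sum>i=0..N. 1 / (real i + 1)) = harm (Suc N)"
    unfolding harm_altdef by (intro sum.cong) (auto simp: field_simps)
  also have "harm (Suc N) - ln (real (Suc N)) \<le> harm 1 - ln (real (1::nat))"
    by (rule euler_mascheroni_sequence_decreasing) auto
  then have "harm (Suc N) \<le> 1 + ln (real (Suc N))" by (simp add: harm_expand)
  also have "ln (real (Suc N)) \<le> ln (2 * real N)" using assms by (subst ln_le_cancel_iff) auto
  also have "\<dots> = ln 2 + ln (real N)" using assms by (simp add: ln_mult)
  also have "ln (2::real) \<le> 1" using ln_2_less_1 by simp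
  finally show ?thesis by simp
qed

lemma e_bound:
  fixes f f' :: "real \<Rightarrow> real"
  assumes der: "\<And>x. x \<in> {0..1} \<Longrightarrow> (f has_real_derivative f' x) (at x within {0..1})"
    and lip: "L-lipschitz_on {0..1} f'" and f0: "f 0 = 0" and f1: "f 1 = 0"
    and N: "N \<ge> 1" and m: "m \<le> N"
  shows "\<bar>real N * ((if m < N then f (real (Suc m) / real N) else 0) -
                    (if 1 \<le> m then f (real (m - 1) / real N) else 0)) - 2 * f' (real m / real N)\<bar>
         \<le> 2 * L / real N + (\<bar>f' 0\<bar> + \<bar>f' 1\<bar> + L) * (if m = 0 \<or> m = N then 1 else 0)"
proof -
  have L0: "L \<ge> 0" using lip unfolding lipschitz_on_def by simp
  define n where "n = real N"
  have n: "n \<ge> 1" using N by (simp add: n_def)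
  have T: "\<bar>f y - f z - f' z * (y - z)\<bar> \<le> L * (y - z)^2" if "z \<in> {0..1}" "y \<in> {0..1}" for y z
    by (rule taylor_lip[OF der lip that])
  have key: "\<bar>n * (f y - f z) - f' z * s\<bar> \<le> L / n"
    if "z \<in> {0..1}" "y \<in> {0..1}" "y - z = s / n" "\<bar>s\<bar> = 1" for y z s
  proof -
    have "\<bar>f y - f z - f' z * (y - z)\<bar> \<le> L * (y - z)^2" by (rule T[OF that(1,2)])
    also have "(y - z)^2 = 1 / n^2" using that(3,4) n by (simp add: power_divide power2_eq_square abs_mult_self_eq[symmetric, of s] flip: abs_mult)
    finally have h: "\<bar>f y - f z - f' z * (y - z)\<bar> \<le> L / n^2" by simp
    have e: "n * (y - z) = s" using that(3) n by (simp add: field_simps)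
    have "n * (f y - f z) - f' z * s = n * (f y - f z - f' z * (y - z))"
      unfolding e[symmetric] by (simp add: algebra_simps)
    then have "\<bar>n * (f y - f z) - f' z * s\<bar> = n * \<bar>f y - f z - f' z * (y - z)\<bar>"
      using n by (simp add: abs_mult)
    also have "\<dots> \<le> n * (L / n^2)" using h n by (intro mult_left_mono) auto
    also have "\<dots> = L / n" using n by (simp add: power2_eq_square field_simps)
    finally show ?thesis .
  qed
  have mN: "real m / n \<in> {0..1}" using m n by (auto simp: n_def field_simps)
  consider "m = 0" | "m = N" "m \<noteq> 0" | "0 < m" "m < N" using m by fastforce
  then show ?thesis
  proof cases
    case 1
    have "\<bar>n * (f (1 / n) - f 0) - f' 0 * 1\<bar> \<le> L / n"
      by (rule key) (use n in \<open>auto simp: field_simps\<close>)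
    then have "\<bar>n * f (1/n) - 2 * f' 0\<bar> \<le> L / n + \<bar>f' 0\<bar>" using f0 abs_ge_self[of "f' 0"] abs_ge_minus_self[of "f' 0"] by (auto simp: abs_le_iff)
    moreover have "L / n \<le> 2 * L / n" using L0 n by (simp add: divide_right_mono)
    ultimately have "\<bar>n * f (1/n) - 2 * f' 0\<bar> \<le> 2 * L / n + (\<bar>f' 0\<bar> + \<bar>f' 1\<bar> + L)"
      using L0 abs_ge_zero[of "f' 1"] by linarith
    then show ?thesis using 1 N by (simp add: n_def[symmetric])
  next
    case 2
    have "\<bar>n * (f ((n - 1) / n) - f 1) - f' 1 * (-1)\<bar> \<le> L / n"
      by (rule key) (use n in \<open>auto simp: field_simps\<close>)
    then have "\<bar>n * (0 - f ((n - 1) / n)) - 2 * f' 1\<bar> \<le> L / n + \<bar>f' 1\<bar>" using f1 abs_ge_self[of "f' 1"] abs_ge_minus_self[of "f' 1"] by (auto simp: abs_le_iff)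
    moreover have "L / n \<le> 2 * L / n" using L0 n by (simp add: divide_right_mono)
    moreover have "real (m - 1) = n - 1" using 2 N by (simp add: n_def of_nat_diff)
    ultimately have "\<bar>n * (0 - f (real (m - 1) / n)) - 2 * f' 1\<bar> \<le> 2 * L / n + (\<bar>f' 0\<bar> + \<bar>f' 1\<bar> + L)"
      using L0 abs_ge_zero[of "f' 0"] by simp
    then show ?thesis using 2 N n by (simp add: n_def[symmetric])
  next
    case 3
    have a: "\<bar>n * (f (real (Suc m) / n) - f (real m / n)) - f' (real m / n) * 1\<bar> \<le> L / n"
      by (rule key) (use n 3 mN in \<open>auto simp: field_simps n_def\<close>)
    have b: "\<bar>n * (f (real (m - 1) / n) - f (real m / n)) - f' (real m / n) * (-1)\<bar> \<le> L / n"
      by (rule key) (use n 3 mN in \<open>auto simp: field_simps n_def of_nat_diff\<close>)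
    have "\<bar>n * (f (real (Suc m) / n) - f (real (m - 1) / n)) - 2 * f' (real m / n)\<bar> \<le> L / n + L / n"
    proof -
      define P where "P = n * (f (real (Suc m) / n) - f (real m / n)) - f' (real m / n) * 1"
      define Q where "Q = n * (f (real (m - 1) / n) - f (real m / n)) - f' (real m / n) * (-1)"
      have eq: "n * (f (real (Suc m) / n) - f (real (m - 1) / n)) - 2 * f' (real m / n) = P - Q"
        unfolding P_def Q_def by (simp add: algebra_simps)
      have "\<bar>P - Q\<bar> \<le> \<bar>P\<bar> + \<bar>Q\<bar>" by (rule abs_triangle_ineq4)
      then show ?thesis unfolding eq using a b unfolding P_def[symmetric] Q_def[symmetric] by linarith
    qed
    then show ?thesis using 3 by (simp add: n_def[symmetric])
  qed
qed

lemma toep_succ: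
  assumes "0 < a" "a < 1"
  shows "toeplitz_entry (phi (a + 1)) k l =
         fourier_coeff (phi a) (int k - int l + 1) - fourier_coeff (phi a) (int k - int l - 1)"
  unfolding toeplitz_entry_def coeff_succ[OF assms] ..

lemma frac_diff_eq:
  fixes f f' :: "real \<Rightarrow> real" and x a :: real and N :: nat
  assumes a: "0 < a" "a < 1" and f0: "f 0 = 0" and f1: "f 1 = 0" and N: "N \<ge> 1"
  defines "h \<equiv> \<lambda>j. fourier_coeff (phi a) (int (nat \<lfloor>real N * x\<rfloor>) - j)"
  shows "frac_seq (a + 1) f x N - 2 * frac_seq a f' x N =
         complex_of_real (real N powr a) * (\<Sum>m=0..N. h (int m) * complex_of_real
            (real N * ((if m < N then f (real (Suc m) / real N) else 0) -
                    (if 1 \<le> m then f (real (m - 1) / real N) else 0)) - 2 * f' (real m / real N)))"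
proof -
  define k where "k = nat \<lfloor>real N * x\<rfloor>"
  define X where "X = (\<lambda>l. complex_of_real (f (real l / real N)))"
  have X0: "X 0 = 0" using f0 by (simp add: X_def)
  have XN: "X N = 0" using f1 N by (simp add: X_def)
  have hk: "h = (\<lambda>j. fourier_coeff (phi a) (int k - j))" unfolding h_def k_def ..
  have S1: "(\<Sum>l=0..N. toeplitz_entry (phi (a + 1)) k l * X l) =
            (\<Sum>l=0..N. h (int l - 1) * X l) - (\<Sum>l=0..N. h (int l + 1) * X l)"
    unfolding toep_succ[OF a] hk sum_subtractf[symmetric]
    by (intro sum.cong refl) (simp add: algebra_simps)
  also have "\<dots> = (\<Sum>m=0..N. h (int m) * ((if m < N then X (Suc m) else 0) - (if 1 \<le> m then X (m - 1) else 0)))"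
    unfolding shiftL1 shiftL2 X0 XN by (simp add: sum_subtractf[symmetric] algebra_simps)
  also have "\<dots> = (\<Sum>m=0..N. h (int m) * complex_of_real ((if m < N then f (real (Suc m) / real N) else 0) -
                    (if 1 \<le> m then f (real (m - 1) / real N) else 0)))"
    by (intro sum.cong refl) (simp add: X_def)
  finally have S1': "(\<Sum>l=0..N. toeplitz_entry (phi (a + 1)) k l * X l) =
      (\<Sum>m=0..N. h (int m) * complex_of_real ((if m < N then f (real (Suc m) / real N) else 0) -
                    (if 1 \<le> m then f (real (m - 1) / real N) else 0)))" .
  have S1'': "(\<Sum>l=0..N. toeplitz_entry (phi (a + 1)) k l * complex_of_real (f (real l / real N))) =
      (\<Sum>m=0..N. h (int m) * complex_of_real ((if m < N then f (real (Suc m) / real N) else 0) -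
                    (if 1 \<le> m then f (real (m - 1) / real N) else 0)))"
    using S1' unfolding X_def .
  have S2: "(\<Sum>l=0..N. toeplitz_entry (phi a) k l * complex_of_real (f' (real l / real N))) =
            (\<Sum>m=0..N. h (int m) * complex_of_real (f' (real m / real N)))"
    unfolding hk toeplitz_entry_def ..
  have pw: "real N powr (a + 1) = real N powr a * real N"
    using N by (simp add: powr_add)
  have "frac_seq (a + 1) f x N - 2 * frac_seq a f' x N =
        complex_of_real (real N powr a) * (complex_of_real (real N) *
          (\<Sum>m=0..N. h (int m) * complex_of_real ((if m < N then f (real (Suc m) / real N) else 0) -
                    (if 1 \<le> m then f (real (m - 1) / real N) else 0)))
          - 2 * (\<Sum>m=0..N. h (int m) * complex_of_real (f' (real m / real N))))"
    unfolding frac_seq_def k_def[symmetric] S1'' S2 pw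
    by (simp add: algebra_simps)
  also have "\<dots> = complex_of_real (real N powr a) * (\<Sum>m=0..N. h (int m) * complex_of_real
            (real N * ((if m < N then f (real (Suc m) / real N) else 0) -
                    (if 1 \<le> m then f (real (m - 1) / real N) else 0)) - 2 * f' (real m / real N)))"
    by (simp add: sum_distrib_left sum_subtractf[symmetric] algebra_simps)
  finally show ?thesis .
qed

lemma delta_sum:
  fixes g :: "nat \<Rightarrow> real" assumes "N \<ge> 1"
  shows "(\<Sum>m=0..N. g m * (if m = 0 \<or> m = N then 1 else 0)) = g 0 + g N"
proof -
  have "(\<Sum>m=0..N. g m * (if m = 0 \<or> m = N then 1 else 0)) = (\<Sum>m=0..N. if m \<in> {0, N} then g m else 0)"
    by (intro sum.cong) auto
  also have "\<dots> = sum g ({0..N} \<inter> {0, N})" by (rule sum.inter_restrict[symmetric]) simp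
  also have "{0..N} \<inter> {0, N} = {0, N}" by auto
  also have "sum g {0, N} = g 0 + g N" using assms by simp
  finally show ?thesis .
qed

lemma diff_bound:
  fixes f f' :: "real \<Rightarrow> real" and x a L :: real and N :: nat
  assumes a: "0 < a" "a < 1"
    and der: "\<And>x. x \<in> {0..1} \<Longrightarrow> (f has_real_derivative f' x) (at x within {0..1})"
    and lip: "L-lipschitz_on {0..1} f'" and f0: "f 0 = 0" and f1: "f 1 = 0"
    and x: "0 < x" "x < 1" and N: "N \<ge> 1"
  shows "norm (frac_seq (a + 1) f x N - 2 * frac_seq a f' x N) \<le>
         real N powr (a - 1) * (32 * L + 4 * (\<bar>f' 0\<bar> + \<bar>f' 1\<bar> + L) * (1 / x + 1 / (1 - x))
                                + 16 * L * ln (real N))"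
proof -
  define k where "k = nat \<lfloor>real N * x\<rfloor>"
  define h where "h = (\<lambda>j. fourier_coeff (phi a) (int k - j))"
  define M0 where "M0 = \<bar>f' 0\<bar> + \<bar>f' 1\<bar> + L"
  define e where "e = (\<lambda>m. real N * ((if m < N then f (real (Suc m) / real N) else 0) -
                    (if 1 \<le> m then f (real (m - 1) / real N) else 0)) - 2 * f' (real m / real N))"
  define w where "w = (\<lambda>m::nat. 4 / (real_of_int \<bar>int k - int m\<bar> + 1))"
  define n where "n = real N"
  have n: "n \<ge> 1" using N by (simp add: n_def)
  have L0: "L \<ge> 0" using lip unfolding lipschitz_on_def by simp
  have M00: "M0 \<ge> 0" using L0 by (simp add: M0_def)
  have kle: "real k \<le> n * x" using x n by (simp add: k_def n_def)
  have kge: "n * x \<le> real k + 1" using x n by (simp add: k_def n_def)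
  have kN: "k \<le> N"
  proof -
    have "n * x \<le> n" using x n by simp
    then show ?thesis using kle by (simp add: n_def)
  qed
  have eq: "frac_seq (a + 1) f x N - 2 * frac_seq a f' x N =
        complex_of_real (real N powr a) * (\<Sum>m=0..N. h (int m) * complex_of_real (e m))"
    unfolding frac_diff_eq[OF a f0 f1 N] h_def k_def e_def ..
  have "norm (\<Sum>m=0..N. h (int m) * complex_of_real (e m)) \<le> (\<Sum>m=0..N. norm (h (int m)) * \<bar>e m\<bar>)"
    by (rule order.trans[OF norm_sum]) (simp add: norm_mult)
  also have "\<dots> \<le> (\<Sum>m=0..N. w m * (2 * L / n + M0 * (if m = 0 \<or> m = N then 1 else 0)))"
  proof (intro sum_mono mult_mono)
    fix m assume m: "m \<in> {0..N}"
    show "norm (h (int m)) \<le> w m" unfolding h_def w_def by (rule coeff_bound[OF a])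
    show "\<bar>e m\<bar> \<le> 2 * L / n + M0 * (if m = 0 \<or> m = N then 1 else 0)"
      unfolding e_def n_def M0_def using e_bound[OF der lip f0 f1 N] m by simp
    show "0 \<le> w m" by (simp add: w_def)
  qed simp
  also have "\<dots> = (2 * L / n) * (\<Sum>m=0..N. w m) + M0 * (\<Sum>m=0..N. w m * (if m = 0 \<or> m = N then 1 else 0))"
    by (simp add: sum.distrib sum_distrib_left algebra_simps sum_divide_distrib[symmetric])
  also have "(\<Sum>m=0..N. w m * (if m = 0 \<or> m = N then 1 else 0)) = w 0 + w N"
    by (rule delta_sum[OF N])
  finally have S0: "norm (\<Sum>m=0..N. h (int m) * complex_of_real (e m)) \<le> (2 * L / n) * (\<Sum>m=0..N. w m) + M0 * (w 0 + w N)" .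
  have T1: "(\<Sum>m=0..N. w m) \<le> 8 * (2 + ln n)"
  proof -
    have "(\<Sum>m=0..N. w m) = 4 * (\<Sum>m=0..N. 1 / (real_of_int \<bar>int k - int m\<bar> + 1))"
      by (simp add: w_def sum_distrib_left)
    also have "\<dots> \<le> 4 * (2 * (\<Sum>i=0..N. 1 / (real i + 1)))"
      by (intro mult_left_mono harm_sum_bound kN) auto
    also have "\<dots> \<le> 4 * (2 * (2 + ln n))"
      unfolding n_def by (intro mult_left_mono harm_ln_bound N) auto
    finally show ?thesis by simp
  qed
  have T2: "w 0 \<le> 4 / (n * x)"
  proof -
    have "w 0 = 4 / (real k + 1)" by (simp add: w_def)
    also have "\<dots> \<le> 4 / (n * x)" using kge x n by (intro divide_left_mono) auto
    finally show ?thesis .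
  qed
  have T3: "w N \<le> 4 / (n * (1 - x))"
  proof -
    have "w N = 4 / (n - real k + 1)" using kN by (simp add: w_def n_def of_nat_diff)
    also have "\<dots> \<le> 4 / (n * (1 - x))"
    proof (rule divide_left_mono)
      show c1: "n * (1 - x) \<le> n - real k + 1" using kle by (simp add: algebra_simps)
      have c2: "0 < n * (1 - x)" using x n by simp
      have c3: "0 < n - real k + 1" using c1 c2 by linarith
      show "0 < (n - real k + 1) * (n * (1 - x))" using c3 c2 by (rule mult_pos_pos)
    qed simp
    finally show ?thesis .
  qed
  have S: "norm (\<Sum>m=0..N. h (int m) * complex_of_real (e m)) \<le>
       2 * L / n * (8 * (2 + ln n)) + M0 * (4 / (n * x) + 4 / (n * (1 - x)))"
  proof -
    have "(2 * L / n) * (\<Sum>m=0..N. w m) \<le> 2 * L / n * (8 * (2 + ln n))"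
      using T1 L0 n by (intro mult_left_mono) auto
    moreover have "M0 * (w 0 + w N) \<le> M0 * (4 / (n * x) + 4 / (n * (1 - x)))"
      using T2 T3 M00 by (intro mult_left_mono add_mono) auto
    ultimately show ?thesis using S0 by linarith
  qed
  have "norm (frac_seq (a + 1) f x N - 2 * frac_seq a f' x N) =
        real N powr a * norm (\<Sum>m=0..N. h (int m) * complex_of_real (e m))"
    unfolding eq norm_mult by simp
  also have "\<dots> \<le> n powr a * (2 * L / n * (8 * (2 + ln n)) + M0 * (4 / (n * x) + 4 / (n * (1 - x))))"
    unfolding n_def[symmetric] by (intro mult_left_mono S) auto
  also have "\<dots> = (n powr a / n) * (32 * L + 4 * M0 * (1 / x + 1 / (1 - x)) + 16 * L * ln n)"
    using n x by (simp add: field_simps)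
  also have "n powr a / n = n powr (a - 1)" using n by (simp add: powr_diff)
  finally show ?thesis by (simp add: n_def M0_def)
qed

lemma bound_tendsto:
  fixes a C D :: real assumes "0 < a" "a < 1"
  shows "(\<lambda>N. real N powr (a - 1) * (C + D * ln (real N))) \<longlonglongrightarrow> 0"
proof -
  have t1: "(\<lambda>N. real N powr (a - 1)) \<longlonglongrightarrow> 0"
    using assms by (intro tendsto_neg_powr filterlim_real_sequentially) auto
  have t2: "(\<lambda>N. ln (real N) / real N powr (1 - a)) \<longlonglongrightarrow> 0"
    using assms by (intro lim_ln_over_power) auto
  have "(\<lambda>N. C * real N powr (a - 1) + D * (ln (real N) / real N powr (1 - a))) \<longlonglongrightarrow> C * 0 + D * 0"
    by (intro tendsto_intros t1 t2)
  moreover have "eventually (\<lambda>N. C * real N powr (a - 1) + D * (ln (real N) / real N powr (1 - a)) =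
       real N powr (a - 1) * (C + D * ln (real N))) sequentially"
  proof (rule eventually_mono[OF eventually_gt_at_top[of 0]])
    fix N :: nat assume "0 < N"
    have "real N powr (a - 1) = 1 / real N powr (1 - a)"
      using \<open>0 < N\<close> by (simp add: powr_minus_divide[symmetric] powr_minus)
    then show "C * real N powr (a - 1) + D * (ln (real N) / real N powr (1 - a)) =
       real N powr (a - 1) * (C + D * ln (real N))" by (simp add: add_divide_distrib)
  qed
  ultimately show ?thesis by (simp add: tendsto_cong)
qed

theorem mainTheorem6:
  fixes \<alpha> :: real and f f' :: "real \<Rightarrow> real"
  assumes "0 < \<alpha>" and "\<alpha> < 1"
    and "\<And>x. x \<in> {0..1} \<Longrightarrow> (f has_real_derivative f' x) (at x within {0..1})"
    and "f 0 = 0" and "f 1 = 0"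
    and "\<exists>C. C-lipschitz_on {0..1} f'"
  shows "\<forall>x \<in> {0<..<1}.
           (frac_derivable (\<alpha> + 1) f x \<longleftrightarrow> frac_derivable \<alpha> f' x) \<and>
           (frac_derivable (\<alpha> + 1) f x \<longrightarrow>
              frac_deriv (\<alpha> + 1) f x = 2 * frac_deriv \<alpha> f' x)"
proof
  fix x :: real assume x: "x \<in> {0<..<1}"
  obtain L where lip: "L-lipschitz_on {0..1} f'" using assms(6) by blast
  define u where "u = frac_seq (\<alpha> + 1) f x"
  define v where "v = frac_seq \<alpha> f' x"
  have D: "(\<lambda>N. u N - 2 * v N) \<longlonglongrightarrow> 0"
  proof (rule Lim_null_comparison)
    show "eventually (\<lambda>N. norm (u N - 2 * v N) \<le> real N powr (\<alpha> - 1) *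
            ((32 * L + 4 * (\<bar>f' 0\<bar> + \<bar>f' 1\<bar> + L) * (1 / x + 1 / (1 - x))) + (16 * L) * ln (real N))) sequentially"
      using eventually_ge_at_top[of "1::nat"]
    proof (rule eventually_mono)
      fix N :: nat assume "1 \<le> N"
      then show "norm (u N - 2 * v N) \<le> real N powr (\<alpha> - 1) *
            ((32 * L + 4 * (\<bar>f' 0\<bar> + \<bar>f' 1\<bar> + L) * (1 / x + 1 / (1 - x))) + (16 * L) * ln (real N))"
        unfolding u_def v_def using diff_bound[OF assms(1,2,3) lip assms(4,5), of x N] x by simp
    qed
    show "(\<lambda>N. real N powr (\<alpha> - 1) *
            ((32 * L + 4 * (\<bar>f' 0\<bar> + \<bar>f' 1\<bar> + L) * (1 / x + 1 / (1 - x))) + (16 * L) * ln (real N))) \<longlonglongrightarrow> 0"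
      by (rule bound_tendsto[OF assms(1,2)])
  qed
  have uv: "convergent u \<longleftrightarrow> convergent v"
  proof
    assume "convergent u"
    then obtain l where l: "u \<longlonglongrightarrow> l" by (auto simp: convergent_def)
    have "(\<lambda>N. (u N - (u N - 2 * v N)) / 2) \<longlonglongrightarrow> (l - 0) / 2"
      by (intro tendsto_intros l D) simp
    then have "v \<longlonglongrightarrow> l / 2" by simp
    then show "convergent v" by (auto simp: convergent_def)
  next
    assume "convergent v"
    then obtain l where l: "v \<longlonglongrightarrow> l" by (auto simp: convergent_def)
    have "(\<lambda>N. (u N - 2 * v N) + 2 * v N) \<longlonglongrightarrow> 0 + 2 * l"
      by (intro tendsto_intros l D)
    then have "u \<longlonglongrightarrow> 2 * l" by simp
    then show "convergent u" by (auto simp: convergent_def)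
  qed
  have lim: "lim u = 2 * lim v" if "convergent u"
  proof -
    have "v \<longlonglongrightarrow> lim v" using uv that by (simp add: convergent_LIMSEQ_iff)
    then have "(\<lambda>N. (u N - 2 * v N) + 2 * v N) \<longlonglongrightarrow> 0 + 2 * lim v"
      by (intro tendsto_intros D)
    then have "u \<longlonglongrightarrow> 2 * lim v" by simp
    then show ?thesis by (rule limI)
  qed
  show "(frac_derivable (\<alpha> + 1) f x \<longleftrightarrow> frac_derivable \<alpha> f' x) \<and>
           (frac_derivable (\<alpha> + 1) f x \<longrightarrow>
              frac_deriv (\<alpha> + 1) f x = 2 * frac_deriv \<alpha> f' x)"
    unfolding frac_derivable_def frac_deriv_def u_def[symmetric] v_def[symmetric]
    using uv lim by blast
qed

end
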